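(* The following identity holds: \begin{equation*} \begin{split} &\Delta x \sum_{i=0}^{N-1}\left(\frac{\operatorname{Up}(\varrho^k \widehat u^k u^{k})_{i+3/2} -\operatorname{Up}(\varrho^k \widehat u^k u^{k})_{i-1/2}}{2\Delta x}\right)u_{i+1/2}^k \\ &\qquad = -\Delta x \sum_{i=0}^{N-1}\operatorname{Up}\left(\varrho^k u^{k}\right)_{i+1/2}\partial_{i+1/2}~\left(\frac{|\widehat u^k|^2}{2}\right) + \mathcal{N}_2 \\ &\qquad = -\Delta x\sum_i \partial_t^k \varrho_i\left(\frac{|\widehat u^k|^2}{2}\right)+ \mathcal{N}_2, \end{split} \end{equation*} where the numerical diffusion term $\mathcal{N}_2$ is given by \begin{equation*} \mathcal{N}_2 = \frac{(\Delta x)^2 }{2}\sum_{i=0}^{N-1}\left|\operatorname{Up}\left(\varrho^k u^{k}\right)_{i+1/2}\right|\left|\partial_{i+1/2} \widehat u^k\right|^2. \end{equation*}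
   Context: Finite difference scheme for 1D viscous isentropic compressible Navier–Stokes on $(0,L)$. The interval $[0,L]$ is split into $N$ cells of length $\Delta x=L/N$ with nodes $x_{i-1/2}=i\Delta x$, $i=0,\dots,N$; time levels $t^k=k\Delta t$. Velocities $u^k_{i-1/2}$ live on the nodes with $u^k_{-1/2}=u^k_{N-1/2}=0$, and densities $\varrho^k_i>0$ live on the cells $i=0,\dots,N-1$. Notation: $u^+=\max\{u,0\}$, $u^-=\min\{u,0\}$; $\widehat u_i=\frac{u_{i-1/2}+u_{i+1/2}}{2}$; upwind fluxes $\operatorname{Up}(\varrho u)_{i+1/2}=\varrho_i u^+_{i+1/2}+\varrho_{i+1}u^-_{i+1/2}$ and $\operatorname{Up}(\varrho\widehat u u)_{i+1/2}=(\varrho_i\widehat u_i)u^+_{i+1/2}+(\varrho_{i+1}\widehat u_{i+1})u^-_{i+1/2}$; discrete derivatives $\partial_{i+1/2}f=\frac{f_{i+1}-f_i}{\Delta x}$, $\partial_i v=\frac{v_{i+1/2}-v_{i-1/2}}{\Delta x}$, $\partial_t^k f_i=\frac{f_i^k-f_i^{k-1}}{\Delta t}$. The densities and velocities satisfy the upwind continuity scheme $\partial_t^k\varrho_i+\partial_i\operatorname{Up}(\varrho^k u^k)=0$ (used for the second equality). *)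

theory Defs
  imports Complex_Main
begin

text \<open>Node quantities (velocities, fluxes) are functions
  int => real where index j stands for the node x_{j-1/2} = j dx, j = 0..N.
  Thus u_{i-1/2} = U i and u_{i+1/2} = U (i+1).  Cell quantities (densities)
  are functions int => real with index i for cell i = 0..N-1.  Values outside
  these ranges are irrelevant for the identity (they only occur multiplied by
  boundary velocities, which vanish).\<close>

definition pospart :: "real \<Rightarrow> real" where
  "pospart x = max x 0"

definition negpart :: "real \<Rightarrow> real" where
  "negpart x = min x 0"

definition uhat :: "(int \<Rightarrow> real) \<Rightarrow> int \<Rightarrow> real" where
  "uhat U i = (U i + U (i + 1)) / 2"

text \<open>Upwind flux at node j (i.e. at x_{j-1/2}) of a cell quantity f transported
  by the node velocity U:  Up(f u)_{j-1/2} = f_{j-1} u^+_{j-1/2} + f_j u^-_{j-1/2}.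
  So Up(f u)_{i+1/2} = Up f U (i+1).\<close>
definition Up :: "(int \<Rightarrow> real) \<Rightarrow> (int \<Rightarrow> real) \<Rightarrow> int \<Rightarrow> real" where
  "Up f U j = f (j - 1) * pospart (U j) + f j * negpart (U j)"

text \<open>Discrete derivative of a cell quantity at the node with index j (x_{j-1/2}):
  partial_{i+1/2} f = (f_{i+1} - f_i)/dx = dnode dx f (i+1).\<close>
definition dnode :: "real \<Rightarrow> (int \<Rightarrow> real) \<Rightarrow> int \<Rightarrow> real" where
  "dnode dx f j = (f j - f (j - 1)) / dx"

definition dcell :: "real \<Rightarrow> (int \<Rightarrow> real) \<Rightarrow> int \<Rightarrow> real" where
  "dcell dx V i = (V (i + 1) - V i) / dx"

definition dtime :: "real \<Rightarrow> (nat \<Rightarrow> int \<Rightarrow> real) \<Rightarrow> nat \<Rightarrow> int \<Rightarrow> real" where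
  "dtime dt f k i = (f k i - f (k - 1) i) / dt"

definition numdiff2 :: "real \<Rightarrow> nat \<Rightarrow> (int \<Rightarrow> real) \<Rightarrow> (int \<Rightarrow> real) \<Rightarrow> real" where
  "numdiff2 dx N rho U =
     dx ^ 2 / 2 * (\<Sum>i\<in>{0..<int N}. \<bar>Up rho U (i + 1)\<bar> * \<bar>dnode dx (uhat U) (i + 1)\<bar> ^ 2)"

end

theory Submission
  imports Defs
begin

lemma sum_int_nat: "(\<Sum>i\<in>{0..<int N}. f i) = (\<Sum>n<N. f (int n))"
proof -
  have e: "{0..<int N} = int ` {..<N}"
    by (auto simp: image_iff intro!: bexI[where x="nat _"])
  show ?thesis unfolding e by (subst sum.reindex) auto
qed

lemma tele1:
  fixes F U :: "nat \<Rightarrow> real"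
  shows "(\<Sum>n<N. (F(n+2)-F n)*U(n+1) + F(n+1)*(U(n+2)-U n))
     = F(N+1)*U N - F 1*U 0 + F N * U(N+1) - F 0 * U 1"
  by (induction N) (auto simp: algebra_simps numeral_2_eq_2)

lemma tele2:
  fixes P g :: "nat \<Rightarrow> real"
  shows "(\<Sum>n<N. P(n+1)*(g(n+1) - g n) + (P(n+1) - P n) * g n) = P N * g N - P 0 * g 0"
  by (induction N) (auto simp: algebra_simps)

theorem lemma3p2:
  fixes L dt :: real and N k :: nat
    and rho u :: "nat \<Rightarrow> int \<Rightarrow> real"
  defines "dx \<equiv> L / real N"
  assumes L_pos: "L > 0" and N_pos: "N > 0" and dt_pos: "dt > 0"
    and k_pos: "k \<ge> 1"
    and bc: "\<And>m. u m 0 = 0 \<and> u m (int N) = 0"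
    and rho_pos: "\<And>m i. 0 \<le> i \<Longrightarrow> i < int N \<Longrightarrow> rho m i > 0"
    and cont: "\<And>m i. m \<ge> 1 \<Longrightarrow> 0 \<le> i \<Longrightarrow> i < int N \<Longrightarrow>
                 dtime dt rho m i + dcell dx (Up (rho m) (u m)) i = 0"
  shows "dx * (\<Sum>i\<in>{0..<int N}.
            ((Up (\<lambda>j. rho k j * uhat (u k) j) (u k) (i + 2)
              - Up (\<lambda>j. rho k j * uhat (u k) j) (u k) i) / (2 * dx)) * u k (i + 1))
         = - dx * (\<Sum>i\<in>{0..<int N}.
              Up (rho k) (u k) (i + 1) * dnode dx (\<lambda>j. \<bar>uhat (u k) j\<bar> ^ 2 / 2) (i + 1))
           + numdiff2 dx N (rho k) (u k)
       \<and> - dx * (\<Sum>i\<in>{0..<int N}.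
              Up (rho k) (u k) (i + 1) * dnode dx (\<lambda>j. \<bar>uhat (u k) j\<bar> ^ 2 / 2) (i + 1))
           + numdiff2 dx N (rho k) (u k)
         = - dx * (\<Sum>i\<in>{0..<int N}. dtime dt rho k i * (\<bar>uhat (u k) i\<bar> ^ 2 / 2))
           + numdiff2 dx N (rho k) (u k)"
proof -
  define U where "U = u k"
  define f where "f = rho k"
  define a where "a = uhat U"
  define g where "g = (\<lambda>j. \<bar>a j\<bar> ^ 2 / 2)"
  define P where "P = Up f U"
  define F where "F = Up (\<lambda>j. f j * a j) U"
  have dx: "dx > 0" using L_pos N_pos by (simp add: dx_def)
  have U0: "U 0 = 0" and UN: "U (int N) = 0" using bc by (auto simp: U_def)
  have F0: "F 0 = 0" and FN: "F (int N) = 0" and P0: "P 0 = 0" and PN: "P (int N) = 0"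
    using U0 UN by (auto simp: F_def P_def Up_def pospart_def negpart_def)
  note t1 = tele1[where F="\<lambda>n. F (int n)" and N=N and U="\<lambda>n. U (int n)"]
  have L1: "(\<Sum>n<N. (F(int n+2)-F (int n))*U(int n+1)) = - (\<Sum>n<N. F(int n+1)*(U(int n+2)-U (int n)))"
  proof -
    have "(\<Sum>n<N. (F(int n+2)-F (int n))*U(int n+1)) + (\<Sum>n<N. F(int n+1)*(U(int n+2)-U (int n))) = 0"
      using t1 F0 FN U0 UN by (simp add: sum.distrib[symmetric] add_ac)
    thus ?thesis by linarith
  qed
  have key: "- F(int n+1)*(a(int n+1)-a (int n)) =
     -dx*(P(int n+1) * dnode dx g (int n+1)) + dx^2/2*(\<bar>P(int n+1)\<bar>*\<bar>dnode dx a (int n+1)\<bar>^2)"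
    if "n < N" for n
  proof -
    have fn: "f (int n) > 0" using rho_pos that by (simp add: f_def)
    show ?thesis
    proof (cases "U (int n + 1) \<ge> 0")
      case True
      have "P(int n+1) = f (int n) * U(int n+1)" using True by (simp add: P_def Up_def pospart_def negpart_def)
      moreover have "F(int n+1) = f (int n) * a (int n) * U(int n+1)" using True by (simp add: F_def Up_def pospart_def negpart_def)
      moreover have "f (int n) * U(int n+1) \<ge> 0" using True fn by simp
      ultimately show ?thesis using dx
        by (simp add: dnode_def g_def power2_eq_square field_simps)
    next
      case False
      have "int n + 1 < int N"
        using False UN that by (cases "int n + 1 = int N") auto
      hence fn1: "f (int n + 1) > 0" using rho_pos by (simp add: f_def)
      have "P(int n+1) = f (int n+1) * U(int n+1)" using False by (simp add: P_def Up_def pospart_def negpart_def)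
      moreover have "F(int n+1) = f (int n+1) * a (int n+1) * U(int n+1)" using False by (simp add: F_def Up_def pospart_def negpart_def)
      moreover have "f (int n+1) * U(int n+1) \<le> 0" using False fn1 by (simp add: mult_nonneg_nonpos)
      ultimately show ?thesis using dx
        by (simp add: dnode_def g_def power2_eq_square field_simps)
    qed
  qed
  have eq1: "dx * (\<Sum>i\<in>{0..<int N}. ((F (i + 2) - F i) / (2 * dx)) * U (i + 1))
     = - dx * (\<Sum>i\<in>{0..<int N}. P (i + 1) * dnode dx g (i + 1)) + numdiff2 dx N f U"
  proof -
    have "dx * (\<Sum>i\<in>{0..<int N}. ((F (i + 2) - F i) / (2 * dx)) * U (i + 1))
       = (\<Sum>n<N. (F(int n+2)-F (int n))*U(int n+1)) / 2"
      using dx by (simp add: sum_int_nat sum_distrib_left sum_divide_distrib)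
    also have "\<dots> = (\<Sum>n<N. - F(int n+1)*(a(int n+1)-a (int n)))"
      unfolding L1 by (simp add: sum_divide_distrib sum_negf[symmetric] a_def uhat_def algebra_simps add_divide_distrib diff_divide_distrib)
    also have "\<dots> = (\<Sum>n<N. -dx*(P(int n+1) * dnode dx g (int n+1)) + dx^2/2*(\<bar>P(int n+1)\<bar>*\<bar>dnode dx a (int n+1)\<bar>^2))"
      using key by (intro sum.cong) auto
    also have "\<dots> = - dx * (\<Sum>i\<in>{0..<int N}. P (i + 1) * dnode dx g (i + 1)) + numdiff2 dx N f U"
      by (simp add: sum_int_nat numdiff2_def sum_distrib_left a_def P_def sum_negf[symmetric] sum.distrib[symmetric] sum_divide_distrib)
    finally show ?thesis .
  qed
  have eq2: "(\<Sum>i\<in>{0..<int N}. P (i + 1) * dnode dx g (i + 1)) = (\<Sum>i\<in>{0..<int N}. dtime dt rho k i * g i)"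
  proof -
    note t2 = tele2[where P="\<lambda>n. P (int n)" and N=N and g="\<lambda>n. g (int n)"]
    have s: "(\<Sum>n<N. P(int n+1)*(g(int n+1) - g (int n))) = - (\<Sum>n<N. (P(int n+1) - P (int n)) * g (int n))"
    proof -
      have "(\<Sum>n<N. P(int n+1)*(g(int n+1) - g (int n))) + (\<Sum>n<N. (P(int n+1) - P (int n)) * g (int n)) = 0"
        using t2 P0 PN by (simp add: sum.distrib[symmetric] add_ac)
      thus ?thesis by linarith
    qed
    have c: "dtime dt rho k (int n) = - (P(int n+1) - P (int n)) / dx" if "n < N" for n
      using cont[OF k_pos, of "int n"] that dx by (simp add: dcell_def P_def f_def U_def field_simps)
    have "(\<Sum>i\<in>{0..<int N}. P (i + 1) * dnode dx g (i + 1)) = (\<Sum>n<N. P(int n+1)*(g(int n+1) - g (int n))) / dx"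
      by (simp add: sum_int_nat dnode_def sum_divide_distrib)
    also have "\<dots> = (\<Sum>n<N. (- (P(int n+1) - P (int n)) / dx) * g (int n))"
      unfolding s by (simp add: sum_divide_distrib sum_negf[symmetric] algebra_simps)
    also have "\<dots> = (\<Sum>i\<in>{0..<int N}. dtime dt rho k i * g i)"
      using c by (simp add: sum_int_nat)
    finally show ?thesis .
  qed
  show ?thesis
    using eq1 eq2 unfolding U_def f_def a_def g_def P_def F_def by simp
qed

end
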